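(* Assume $\mathcal T$ is contravariantly finite in $\mathcal A$ and let $f\in\mathcal A(X,Y)$. The following are equivalent: (1) $\overline f$ is a strong monomorphism in the left triangulated category $\underline{\mathcal A}$; (2) for every (equivalently, for some) $\mathcal T$-precover $p_Y:T_Y\to Y$, the projection $g:T\to X$ from the pullback $T$ of $f$ and $p_Y$ is a $\mathcal T$-precover of $X$; (3) for every (equivalently, for some) $\mathcal T$-precover $p_Y:T_Y\to Y$, the pullback object $T$ of $f$ and $p_Y$ belongs to $\mathcal T$.
   Context: $\mathcal A$ is an abelian category and $\mathcal T$ is a full additive subcategory of $\mathcal A$ closed under finite direct sums and direct summands. The stable category $\underline{\mathcal A}=\mathcal A/\langle\mathcal T\rangle$ has the same objects as $\mathcal A$ and morphisms modulo those factoring through an object of $\mathcal T$; $\overline f$ is the class of $f$. When $\mathcal T$ is contravariantly finite, $\underline{\mathcal A}$ carries the left triangulated structure: $\Omega Y=\ker(p_Y)$ for a $\mathcal T$-precover $p_Y:T_Y\to Y$; for $f:X\to Y$ one forms the pullback $Z$ of $f$ and $p_Y$ with projection $g:Z\to X$ and induced morphism $\Omega Y\to Z$; left triangles are the diagrams in $\underline{\mathcal A}$ isomorphic to $\Omega Y\to Z\xrightarrow{\overline g}X\xrightarrow{\overline f}Y$. A morphism $\overline f:X\to Y$ is a strong monomorphism if there is a left triangle $\Omega Y\to 0\to X\xrightarrow{\overline f}Y$. *)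

theory Defs
  imports Main
begin

text \<open>An (abstract) category with objects of type 'o and morphisms of type 'm.
  hom C X Y is the set of morphisms X to Y; cmp C g f is the composite g after f;
  madd / mneg / mzero give the additive (preadditive) structure of the hom-sets.\<close>

record ('o, 'm) acat =
  ob    :: "'o set"
  hom   :: "'o \<Rightarrow> 'o \<Rightarrow> 'm set"
  cmp   :: "'m \<Rightarrow> 'm \<Rightarrow> 'm"
  ident :: "'o \<Rightarrow> 'm"
  madd  :: "'m \<Rightarrow> 'm \<Rightarrow> 'm"
  mneg  :: "'m \<Rightarrow> 'm"
  mzero :: "'o \<Rightarrow> 'o \<Rightarrow> 'm"

definition msub :: "('o, 'm, 'z) acat_scheme \<Rightarrow> 'm \<Rightarrow> 'm \<Rightarrow> 'm" where
  "msub C f g = madd C f (mneg C g)"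

definition category :: "('o, 'm, 'z) acat_scheme \<Rightarrow> bool" where
  "category C \<longleftrightarrow>
     (\<forall>X Y. hom C X Y \<noteq> {} \<longrightarrow> X \<in> ob C \<and> Y \<in> ob C) \<and>
     (\<forall>X \<in> ob C. ident C X \<in> hom C X X) \<and>
     (\<forall>X Y Z f g. f \<in> hom C X Y \<longrightarrow> g \<in> hom C Y Z \<longrightarrow> cmp C g f \<in> hom C X Z) \<and>
     (\<forall>W X Y Z f g h. f \<in> hom C W X \<longrightarrow> g \<in> hom C X Y \<longrightarrow> h \<in> hom C Y Z \<longrightarrow>
        cmp C h (cmp C g f) = cmp C (cmp C h g) f) \<and>
     (\<forall>X Y f. f \<in> hom C X Y \<longrightarrow> cmp C (ident C Y) f = f \<and> cmp C f (ident C X) = f)"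

definition preadditive :: "('o, 'm, 'z) acat_scheme \<Rightarrow> bool" where
  "preadditive C \<longleftrightarrow> category C \<and>
     (\<forall>X \<in> ob C. \<forall>Y \<in> ob C.
        mzero C X Y \<in> hom C X Y \<and>
        (\<forall>f \<in> hom C X Y. \<forall>g \<in> hom C X Y. madd C f g \<in> hom C X Y) \<and>
        (\<forall>f \<in> hom C X Y. mneg C f \<in> hom C X Y) \<and>
        (\<forall>f \<in> hom C X Y. \<forall>g \<in> hom C X Y. \<forall>h \<in> hom C X Y.
            madd C (madd C f g) h = madd C f (madd C g h)) \<and>
        (\<forall>f \<in> hom C X Y. \<forall>g \<in> hom C X Y. madd C f g = madd C g f) \<and>
        (\<forall>f \<in> hom C X Y. madd C f (mzero C X Y) = f) \<and>
        (\<forall>f \<in> hom C X Y. madd C f (mneg C f) = mzero C X Y)) \<and>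
     (\<forall>X Y Z f f' g. f \<in> hom C X Y \<longrightarrow> f' \<in> hom C X Y \<longrightarrow> g \<in> hom C Y Z \<longrightarrow>
        cmp C g (madd C f f') = madd C (cmp C g f) (cmp C g f')) \<and>
     (\<forall>X Y Z f g g'. f \<in> hom C X Y \<longrightarrow> g \<in> hom C Y Z \<longrightarrow> g' \<in> hom C Y Z \<longrightarrow>
        cmp C (madd C g g') f = madd C (cmp C g f) (cmp C g' f))"

definition is_zero_obj :: "('o, 'm, 'z) acat_scheme \<Rightarrow> 'o \<Rightarrow> bool" where
  "is_zero_obj C Z \<longleftrightarrow> Z \<in> ob C \<and>
     (\<forall>X \<in> ob C. (\<exists>!f. f \<in> hom C Z X) \<and> (\<exists>!f. f \<in> hom C X Z))"

definition is_biproduct :: "('o, 'm, 'z) acat_scheme \<Rightarrow> 'o \<Rightarrow> 'o \<Rightarrow> 'o \<Rightarrow>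
    'm \<Rightarrow> 'm \<Rightarrow> 'm \<Rightarrow> 'm \<Rightarrow> bool" where
  "is_biproduct C X Y S i1 i2 p1 p2 \<longleftrightarrow>
     i1 \<in> hom C X S \<and> i2 \<in> hom C Y S \<and> p1 \<in> hom C S X \<and> p2 \<in> hom C S Y \<and>
     cmp C p1 i1 = ident C X \<and> cmp C p2 i2 = ident C Y \<and>
     cmp C p2 i1 = mzero C X Y \<and> cmp C p1 i2 = mzero C Y X \<and>
     madd C (cmp C i1 p1) (cmp C i2 p2) = ident C S"

definition additive :: "('o, 'm, 'z) acat_scheme \<Rightarrow> bool" where
  "additive C \<longleftrightarrow> preadditive C \<and> (\<exists>Z. is_zero_obj C Z) \<and>
     (\<forall>X \<in> ob C. \<forall>Y \<in> ob C. \<exists>S i1 i2 p1 p2. is_biproduct C X Y S i1 i2 p1 p2)"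

definition is_kernel :: "('o, 'm, 'z) acat_scheme \<Rightarrow> 'm \<Rightarrow> 'o \<Rightarrow> 'o \<Rightarrow> 'o \<Rightarrow> 'm \<Rightarrow> bool" where
  "is_kernel C f X Y K k \<longleftrightarrow> f \<in> hom C X Y \<and> k \<in> hom C K X \<and> cmp C f k = mzero C K Y \<and>
     (\<forall>W h. h \<in> hom C W X \<and> cmp C f h = mzero C W Y \<longrightarrow>
        (\<exists>!u. u \<in> hom C W K \<and> cmp C k u = h))"

definition is_cokernel :: "('o, 'm, 'z) acat_scheme \<Rightarrow> 'm \<Rightarrow> 'o \<Rightarrow> 'o \<Rightarrow> 'o \<Rightarrow> 'm \<Rightarrow> bool" where
  "is_cokernel C f X Y Q q \<longleftrightarrow> f \<in> hom C X Y \<and> q \<in> hom C Y Q \<and> cmp C q f = mzero C X Q \<and>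
     (\<forall>W h. h \<in> hom C Y W \<and> cmp C h f = mzero C X W \<longrightarrow>
        (\<exists>!u. u \<in> hom C Q W \<and> cmp C u q = h))"

definition is_mono :: "('o, 'm, 'z) acat_scheme \<Rightarrow> 'm \<Rightarrow> 'o \<Rightarrow> 'o \<Rightarrow> bool" where
  "is_mono C f X Y \<longleftrightarrow> f \<in> hom C X Y \<and>
     (\<forall>W g h. g \<in> hom C W X \<longrightarrow> h \<in> hom C W X \<longrightarrow> cmp C f g = cmp C f h \<longrightarrow> g = h)"

definition is_epi :: "('o, 'm, 'z) acat_scheme \<Rightarrow> 'm \<Rightarrow> 'o \<Rightarrow> 'o \<Rightarrow> bool" where
  "is_epi C f X Y \<longleftrightarrow> f \<in> hom C X Y \<and>
     (\<forall>W g h. g \<in> hom C Y W \<longrightarrow> h \<in> hom C Y W \<longrightarrow> cmp C g f = cmp C h f \<longrightarrow> g = h)"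

definition abelian :: "('o, 'm, 'z) acat_scheme \<Rightarrow> bool" where
  "abelian C \<longleftrightarrow> additive C \<and>
     (\<forall>X Y f. f \<in> hom C X Y \<longrightarrow> (\<exists>K k. is_kernel C f X Y K k) \<and> (\<exists>Q q. is_cokernel C f X Y Q q)) \<and>
     (\<forall>X Y f. is_mono C f X Y \<longrightarrow> (\<exists>Z g. is_kernel C g Y Z X f)) \<and>
     (\<forall>X Y f. is_epi C f X Y \<longrightarrow> (\<exists>Z g. is_cokernel C g Z X Y f))"

text \<open>A full additive subcategory, given by its class of objects T, closed under finite
  direct sums (contains a zero object, closed under binary direct sums) and direct summands.\<close>
definition additive_subcat :: "('o, 'm, 'z) acat_scheme \<Rightarrow> 'o set \<Rightarrow> bool" where
  "additive_subcat C T \<longleftrightarrow> T \<subseteq> ob C \<and> (\<exists>Z \<in> T. is_zero_obj C Z) \<and>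
     (\<forall>X \<in> T. \<forall>Y \<in> T. \<forall>S i1 i2 p1 p2. is_biproduct C X Y S i1 i2 p1 p2 \<longrightarrow> S \<in> T) \<and>
     (\<forall>S \<in> T. \<forall>X Y i1 i2 p1 p2. is_biproduct C X Y S i1 i2 p1 p2 \<longrightarrow> X \<in> T)"

definition precover :: "('o, 'm, 'z) acat_scheme \<Rightarrow> 'o set \<Rightarrow> 'm \<Rightarrow> 'o \<Rightarrow> 'o \<Rightarrow> bool" where
  "precover C T p P Y \<longleftrightarrow> P \<in> T \<and> p \<in> hom C P Y \<and>
     (\<forall>T' h. T' \<in> T \<and> h \<in> hom C T' Y \<longrightarrow> (\<exists>u. u \<in> hom C T' P \<and> cmp C p u = h))"

definition contravariantly_finite :: "('o, 'm, 'z) acat_scheme \<Rightarrow> 'o set \<Rightarrow> bool" where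
  "contravariantly_finite C T \<longleftrightarrow> (\<forall>Y \<in> ob C. \<exists>P p. precover C T p P Y)"

definition factors_through :: "('o, 'm, 'z) acat_scheme \<Rightarrow> 'o set \<Rightarrow> 'm \<Rightarrow> 'o \<Rightarrow> 'o \<Rightarrow> bool" where
  "factors_through C T f X Y \<longleftrightarrow>
     (\<exists>P a b. P \<in> T \<and> a \<in> hom C X P \<and> b \<in> hom C P Y \<and> f = cmp C b a)"

text \<open>Equality of morphisms X \<rightarrow> Y in the stable category A / <T>.\<close>
definition st_eq :: "('o, 'm, 'z) acat_scheme \<Rightarrow> 'o set \<Rightarrow> 'o \<Rightarrow> 'o \<Rightarrow> 'm \<Rightarrow> 'm \<Rightarrow> bool" where
  "st_eq C T X Y f g \<longleftrightarrow> f \<in> hom C X Y \<and> g \<in> hom C X Y \<and> factors_through C T (msub C f g) X Y"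

definition st_iso :: "('o, 'm, 'z) acat_scheme \<Rightarrow> 'o set \<Rightarrow> 'o \<Rightarrow> 'o \<Rightarrow> 'm \<Rightarrow> bool" where
  "st_iso C T X Y \<phi> \<longleftrightarrow> \<phi> \<in> hom C X Y \<and>
     (\<exists>\<psi> \<in> hom C Y X. st_eq C T X X (cmp C \<psi> \<phi>) (ident C X) \<and> st_eq C T Y Y (cmp C \<phi> \<psi>) (ident C Y))"

definition is_pullback :: "('o, 'm, 'z) acat_scheme \<Rightarrow> 'm \<Rightarrow> 'o \<Rightarrow> 'o \<Rightarrow> 'm \<Rightarrow> 'o \<Rightarrow>
    'o \<Rightarrow> 'm \<Rightarrow> 'm \<Rightarrow> bool" where
  "is_pullback C f X Y p P P' g q \<longleftrightarrow>
     f \<in> hom C X Y \<and> p \<in> hom C P Y \<and> g \<in> hom C P' X \<and> q \<in> hom C P' P \<and>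
     cmp C f g = cmp C p q \<and>
     (\<forall>W a b. a \<in> hom C W X \<and> b \<in> hom C W P \<and> cmp C f a = cmp C p b \<longrightarrow>
        (\<exists>!u. u \<in> hom C W P' \<and> cmp C g u = a \<and> cmp C q u = b))"

text \<open>Standard left triangle Omega Y \<rightarrow> Z \<rightarrow> X \<rightarrow> Y attached to f : X \<rightarrow> Y
  (representatives in A of the stable morphisms u, g, f).\<close>
definition std_left_triangle :: "('o, 'm, 'z) acat_scheme \<Rightarrow> 'o set \<Rightarrow>
    'o \<Rightarrow> 'o \<Rightarrow> 'o \<Rightarrow> 'o \<Rightarrow> 'm \<Rightarrow> 'm \<Rightarrow> 'm \<Rightarrow> bool" where
  "std_left_triangle C T Om Z X Y u g f \<longleftrightarrow>
     (\<exists>TY p k q. precover C T p TY Y \<and> is_kernel C p TY Y Om k \<and>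
        is_pullback C f X Y p TY Z g q \<and>
        u \<in> hom C Om Z \<and> cmp C g u = mzero C Om X \<and> cmp C q u = k)"

definition st_diag_iso :: "('o, 'm, 'z) acat_scheme \<Rightarrow> 'o set \<Rightarrow>
    'o \<Rightarrow> 'o \<Rightarrow> 'o \<Rightarrow> 'o \<Rightarrow> 'm \<Rightarrow> 'm \<Rightarrow> 'm \<Rightarrow>
    'o \<Rightarrow> 'o \<Rightarrow> 'o \<Rightarrow> 'o \<Rightarrow> 'm \<Rightarrow> 'm \<Rightarrow> 'm \<Rightarrow> bool" where
  "st_diag_iso C T A1 A2 A3 A4 a1 a2 a3 B1 B2 B3 B4 b1 b2 b3 \<longleftrightarrow>
     a1 \<in> hom C A1 A2 \<and> a2 \<in> hom C A2 A3 \<and> a3 \<in> hom C A3 A4 \<and>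
     b1 \<in> hom C B1 B2 \<and> b2 \<in> hom C B2 B3 \<and> b3 \<in> hom C B3 B4 \<and>
     (\<exists>\<phi>1 \<phi>2 \<phi>3 \<phi>4. st_iso C T A1 B1 \<phi>1 \<and> st_iso C T A2 B2 \<phi>2 \<and>
        st_iso C T A3 B3 \<phi>3 \<and> st_iso C T A4 B4 \<phi>4 \<and>
        st_eq C T A1 B2 (cmp C \<phi>2 a1) (cmp C b1 \<phi>1) \<and>
        st_eq C T A2 B3 (cmp C \<phi>3 a2) (cmp C b2 \<phi>2) \<and>
        st_eq C T A3 B4 (cmp C \<phi>4 a3) (cmp C b3 \<phi>3))"

definition left_triangle :: "('o, 'm, 'z) acat_scheme \<Rightarrow> 'o set \<Rightarrow>
    'o \<Rightarrow> 'o \<Rightarrow> 'o \<Rightarrow> 'o \<Rightarrow> 'm \<Rightarrow> 'm \<Rightarrow> 'm \<Rightarrow> bool" where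
  "left_triangle C T A1 A2 A3 A4 a1 a2 a3 \<longleftrightarrow>
     (\<exists>B1 B2 B3 B4 b1 b2 b3. std_left_triangle C T B1 B2 B3 B4 b1 b2 b3 \<and>
        st_diag_iso C T A1 A2 A3 A4 a1 a2 a3 B1 B2 B3 B4 b1 b2 b3)"

definition strong_mono :: "('o, 'm, 'z) acat_scheme \<Rightarrow> 'o set \<Rightarrow> 'm \<Rightarrow> 'o \<Rightarrow> 'o \<Rightarrow> bool" where
  "strong_mono C T f X Y \<longleftrightarrow> f \<in> hom C X Y \<and>
     (\<exists>TY p Om k Z. precover C T p TY Y \<and> is_kernel C p TY Y Om k \<and> is_zero_obj C Z \<and>
        left_triangle C T Om Z X Y (mzero C Om Z) (mzero C Z X) f)"

end

theory Submission
  imports Defs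
begin


locale pa = fixes C :: "('o,'m,'z) acat_scheme" assumes pre: "preadditive C"
begin

lemma cat: "category C" using pre unfolding preadditive_def by blast

lemmas cat_all = cat[unfolded category_def]
lemmas cat_u1 = cat_all[THEN conjunct1]
lemmas cat_u2 = cat_all[THEN conjunct2, THEN conjunct1]
lemmas cat_u3 = cat_all[THEN conjunct2, THEN conjunct2, THEN conjunct1]
lemmas cat_u4 = cat_all[THEN conjunct2, THEN conjunct2, THEN conjunct2, THEN conjunct1]
lemmas cat_u5 = cat_all[THEN conjunct2, THEN conjunct2, THEN conjunct2, THEN conjunct2]
lemmas cat_u = cat_u1 cat_u2 cat_u3 cat_u4 cat_u5
lemmas pre_all = pre[unfolded preadditive_def, THEN conjunct2]
lemmas pre_u1 = pre_all[THEN conjunct1]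
lemmas pre_u2 = pre_all[THEN conjunct2, THEN conjunct1]
lemmas pre_u3 = pre_all[THEN conjunct2, THEN conjunct2]
lemmas pre_u = pre_u1 pre_u2 pre_u3

lemma hom_ob: "f \<in> hom C X Y \<Longrightarrow> X \<in> ob C \<and> Y \<in> ob C"
  using cat_u(1) by blast

lemma hom_obD: "f \<in> hom C X Y \<Longrightarrow> X \<in> ob C" "f \<in> hom C X Y \<Longrightarrow> Y \<in> ob C"
  using hom_ob by blast+

lemma comp_hom[intro]: "f \<in> hom C X Y \<Longrightarrow> g \<in> hom C Y Z \<Longrightarrow> cmp C g f \<in> hom C X Z"
  using cat_u(3) by blast

lemma id_hom[intro]: "X \<in> ob C \<Longrightarrow> ident C X \<in> hom C X X"
  using cat_u(2) by blast

lemma assoc: "f \<in> hom C W X \<Longrightarrow> g \<in> hom C X Y \<Longrightarrow> h \<in> hom C Y Z \<Longrightarrow>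
        cmp C h (cmp C g f) = cmp C (cmp C h g) f"
  using cat_u(4) by blast

lemma id_left[simp]: "f \<in> hom C X Y \<Longrightarrow> cmp C (ident C Y) f = f"
  using cat_u(5) by blast
lemma id_right[simp]: "f \<in> hom C X Y \<Longrightarrow> cmp C f (ident C X) = f"
  using cat_u(5) by blast

lemma zero_hom[intro]: "X \<in> ob C \<Longrightarrow> Y \<in> ob C \<Longrightarrow> mzero C X Y \<in> hom C X Y"
  using pre_u(1) by blast

lemma zero_hom': "f \<in> hom C X Y \<Longrightarrow> mzero C X Y \<in> hom C X Y"
  using hom_ob zero_hom by blast

lemma add_hom[intro]: "f \<in> hom C X Y \<Longrightarrow> g \<in> hom C X Y \<Longrightarrow> madd C f g \<in> hom C X Y"
  using pre_u(1) hom_ob by blast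

lemma neg_hom[intro]: "f \<in> hom C X Y \<Longrightarrow> mneg C f \<in> hom C X Y"
  using pre_u(1) hom_ob by blast

lemma sub_hom[intro]: "f \<in> hom C X Y \<Longrightarrow> g \<in> hom C X Y \<Longrightarrow> msub C f g \<in> hom C X Y"
  unfolding msub_def by blast

lemma add_assoc: "f \<in> hom C X Y \<Longrightarrow> g \<in> hom C X Y \<Longrightarrow> h \<in> hom C X Y \<Longrightarrow>
            madd C (madd C f g) h = madd C f (madd C g h)"
  using pre_u(1) hom_ob by blast

lemma add_comm: "f \<in> hom C X Y \<Longrightarrow> g \<in> hom C X Y \<Longrightarrow> madd C f g = madd C g f"
  using pre_u(1) hom_ob by blast

lemma add_zero: "f \<in> hom C X Y \<Longrightarrow> madd C f (mzero C X Y) = f"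
  using pre_u(1) hom_ob by blast

lemma add_neg: "f \<in> hom C X Y \<Longrightarrow> madd C f (mneg C f) = mzero C X Y"
  using pre_u(1) hom_ob by blast

lemma distl: "f \<in> hom C X Y \<Longrightarrow> f' \<in> hom C X Y \<Longrightarrow> g \<in> hom C Y Z \<Longrightarrow>
        cmp C g (madd C f f') = madd C (cmp C g f) (cmp C g f')"
  using pre_u(2) by blast

lemma distr: "f \<in> hom C X Y \<Longrightarrow> g \<in> hom C Y Z \<Longrightarrow> g' \<in> hom C Y Z \<Longrightarrow>
        cmp C (madd C g g') f = madd C (cmp C g f) (cmp C g' f)"
  using pre_u(3) by blast

lemma zero_add: "f \<in> hom C X Y \<Longrightarrow> madd C (mzero C X Y) f = f"
  using add_comm add_zero zero_hom' by metis

lemma neg_add: "f \<in> hom C X Y \<Longrightarrow> madd C (mneg C f) f = mzero C X Y"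
  using add_comm add_neg neg_hom by metis

lemma add_left_cancel:
  assumes "a \<in> hom C X Y" "b \<in> hom C X Y" "c \<in> hom C X Y" "madd C a b = madd C a c"
  shows "b = c"
proof -
  have "b = madd C (madd C (mneg C a) a) b" using assms(1,2) neg_add zero_add by metis
  also have "\<dots> = madd C (mneg C a) (madd C a b)" using assms(1,2) add_assoc neg_hom by metis
  also have "\<dots> = madd C (mneg C a) (madd C a c)" using assms(4) by simp
  also have "\<dots> = madd C (madd C (mneg C a) a) c" using assms(1,3) add_assoc neg_hom by metis
  also have "\<dots> = c" using assms(1,3) neg_add zero_add by metis
  finally show ?thesis .
qed

lemma idem_zero:
  assumes "a \<in> hom C X Y" "madd C a a = a" shows "a = mzero C X Y"
  using add_left_cancel[of a X Y a "mzero C X Y"] assms add_zero zero_hom' by metis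

lemma comp_zero_right:
  assumes "g \<in> hom C Y Z" "W \<in> ob C" shows "cmp C g (mzero C W Y) = mzero C W Z"
proof -
  have Y: "Y \<in> ob C" "Z \<in> ob C" using assms hom_ob by auto
  have z: "mzero C W Y \<in> hom C W Y" using Y assms by blast
  have "cmp C g (mzero C W Y) = cmp C g (madd C (mzero C W Y) (mzero C W Y))"
    using z add_zero by metis
  also have "\<dots> = madd C (cmp C g (mzero C W Y)) (cmp C g (mzero C W Y))"
    using distl z assms by blast
  finally show ?thesis using idem_zero z assms comp_hom by metis
qed

lemma comp_zero_left:
  assumes "f \<in> hom C X Y" "Z \<in> ob C" shows "cmp C (mzero C Y Z) f = mzero C X Z"
proof -
  have Y: "X \<in> ob C" "Y \<in> ob C" using assms hom_ob by auto
  have z: "mzero C Y Z \<in> hom C Y Z" using Y assms by blast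
  have "cmp C (mzero C Y Z) f = cmp C (madd C (mzero C Y Z) (mzero C Y Z)) f"
    using z add_zero by metis
  also have "\<dots> = madd C (cmp C (mzero C Y Z) f) (cmp C (mzero C Y Z) f)"
    using distr z assms by blast
  finally show ?thesis using idem_zero z assms comp_hom by metis
qed

lemma neg_unique:
  assumes "a \<in> hom C X Y" "b \<in> hom C X Y" "madd C a b = mzero C X Y" shows "b = mneg C a"
  using add_left_cancel[of a X Y b "mneg C a"] assms add_neg neg_hom by metis

lemma comp_neg_right:
  assumes "f \<in> hom C X Y" "g \<in> hom C Y Z" shows "cmp C g (mneg C f) = mneg C (cmp C g f)"
proof -
  have "madd C (cmp C g f) (cmp C g (mneg C f)) = cmp C g (madd C f (mneg C f))"
    using distl assms neg_hom by metis
  also have "\<dots> = mzero C X Z" using assms add_neg comp_zero_right hom_ob by metis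
  finally show ?thesis using neg_unique assms by blast
qed

lemma comp_neg_left:
  assumes "f \<in> hom C X Y" "g \<in> hom C Y Z" shows "cmp C (mneg C g) f = mneg C (cmp C g f)"
proof -
  have "madd C (cmp C g f) (cmp C (mneg C g) f) = cmp C (madd C g (mneg C g)) f"
    using distr assms neg_hom by metis
  also have "\<dots> = mzero C X Z" using assms add_neg comp_zero_left hom_ob by metis
  finally show ?thesis using neg_unique assms by blast
qed

lemma comp_sub_right:
  assumes "f \<in> hom C X Y" "f' \<in> hom C X Y" "g \<in> hom C Y Z"
  shows "cmp C g (msub C f f') = msub C (cmp C g f) (cmp C g f')"
  unfolding msub_def using assms distl comp_neg_right neg_hom by metis

lemma comp_sub_left:
  assumes "f \<in> hom C X Y" "g \<in> hom C Y Z" "g' \<in> hom C Y Z"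
  shows "cmp C (msub C g g') f = msub C (cmp C g f) (cmp C g' f)"
  unfolding msub_def using assms distr comp_neg_left neg_hom by metis

lemma sub_self: "f \<in> hom C X Y \<Longrightarrow> msub C f f = mzero C X Y"
  unfolding msub_def using add_neg by blast

lemma neg_neg: "f \<in> hom C X Y \<Longrightarrow> mneg C (mneg C f) = f"
  using neg_unique[of "mneg C f" X Y f] neg_add neg_hom by metis

lemma sub_add_cancel: "f \<in> hom C X Y \<Longrightarrow> g \<in> hom C X Y \<Longrightarrow> madd C (msub C f g) g = f"
  unfolding msub_def using add_assoc neg_add add_zero neg_hom by metis

lemma add_sub_cancel: "f \<in> hom C X Y \<Longrightarrow> g \<in> hom C X Y \<Longrightarrow> madd C g (msub C f g) = f"
  using sub_add_cancel add_comm sub_hom by metis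

lemma sub_sub_self: "f \<in> hom C X Y \<Longrightarrow> g \<in> hom C X Y \<Longrightarrow> msub C f (msub C f g) = g"
proof -
  assume a: "f \<in> hom C X Y" "g \<in> hom C X Y"
  have "madd C (msub C f g) (msub C f (msub C f g)) = f" using a add_sub_cancel sub_hom by blast
  moreover have "madd C (msub C f g) g = f" using a sub_add_cancel by blast
  ultimately show ?thesis using add_left_cancel a sub_hom by metis
qed

lemma sub_eq_zero: "f \<in> hom C X Y \<Longrightarrow> g \<in> hom C X Y \<Longrightarrow> msub C f g = mzero C X Y \<Longrightarrow> f = g"
  using sub_add_cancel zero_add by metis

lemma neg_sub: "f \<in> hom C X Y \<Longrightarrow> g \<in> hom C X Y \<Longrightarrow> mneg C (msub C f g) = msub C g f"
proof -
  assume a: "f \<in> hom C X Y" "g \<in> hom C X Y"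
  have "madd C (msub C f g) (msub C g f) = madd C (madd C (msub C f g) g) (mneg C f)"
    unfolding msub_def using a add_assoc neg_hom by (metis msub_def sub_hom)
  also have "\<dots> = mzero C X Y" using a sub_add_cancel add_neg by metis
  finally show ?thesis using neg_unique a sub_hom by metis
qed

lemma sub_trans: "f \<in> hom C X Y \<Longrightarrow> g \<in> hom C X Y \<Longrightarrow> h \<in> hom C X Y \<Longrightarrow>
   msub C f h = madd C (msub C f g) (msub C g h)"
proof -
  assume a: "f \<in> hom C X Y" "g \<in> hom C X Y" "h \<in> hom C X Y"
  have "madd C (msub C f g) (msub C g h) = madd C (madd C (msub C f g) g) (mneg C h)"
    unfolding msub_def using a add_assoc neg_hom by (metis msub_def sub_hom)
  also have "\<dots> = msub C f h" using a sub_add_cancel unfolding msub_def by metis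
  finally show ?thesis by simp
qed

lemma sub_zero: "f \<in> hom C X Y \<Longrightarrow> msub C f (mzero C X Y) = f"
proof -
  assume a: "f \<in> hom C X Y"
  have z: "mzero C X Y \<in> hom C X Y" using a zero_hom' by blast
  have "madd C (mzero C X Y) (mneg C (mzero C X Y)) = mzero C X Y" using add_neg z by blast
  hence "mneg C (mzero C X Y) = mzero C X Y" using zero_add neg_hom z by metis
  thus ?thesis unfolding msub_def using add_zero a by metis
qed

end


context pa begin

lemma ker_hom: "is_kernel C f X Y K k \<Longrightarrow> k \<in> hom C K X \<and> f \<in> hom C X Y \<and> cmp C f k = mzero C K Y"
  unfolding is_kernel_def by blast

lemma ker_fac: "is_kernel C f X Y K k \<Longrightarrow> h \<in> hom C W X \<Longrightarrow> cmp C f h = mzero C W Y \<Longrightarrow>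
   \<exists>e \<in> hom C W K. cmp C k e = h"
  unfolding is_kernel_def by blast

lemma ker_uniq:
  assumes K: "is_kernel C f X Y K k" and e: "e \<in> hom C W K" "e' \<in> hom C W K"
    and eq: "cmp C k e = cmp C k e'"
  shows "e = e'"
proof -
  have k: "k \<in> hom C K X" "f \<in> hom C X Y" "cmp C f k = mzero C K Y" using ker_hom[OF K] by auto
  have h: "cmp C k e \<in> hom C W X" using k e by blast
  have "cmp C f (cmp C k e) = cmp C (cmp C f k) e" using assoc k e by blast
  also have "\<dots> = mzero C W Y" by (simp add: k(3) comp_zero_left[OF e(1) hom_obD(2)[OF k(2)]])
  finally have z: "cmp C f (cmp C k e) = mzero C W Y" .
  have U: "\<forall>W h. h \<in> hom C W X \<and> cmp C f h = mzero C W Y \<longrightarrow>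
        (\<exists>!u. u \<in> hom C W K \<and> cmp C k u = h)" using K unfolding is_kernel_def by (elim conjE)
  have "\<exists>!u. u \<in> hom C W K \<and> cmp C k u = cmp C k e" by (rule U[rule_format, OF conjI[OF h z]])
  then obtain w where w: "\<forall>y. y \<in> hom C W K \<and> cmp C k y = cmp C k e \<longrightarrow> y = w"
    by (elim ex1E) blast
  have "e = w" using w e(1) by blast
  moreover have "e' = w" using w e(2) eq by auto
  ultimately show ?thesis by simp
qed

lemma pb_hom: "is_pullback C f X Y p P P' g q \<Longrightarrow>
   f \<in> hom C X Y \<and> p \<in> hom C P Y \<and> g \<in> hom C P' X \<and> q \<in> hom C P' P \<and> cmp C f g = cmp C p q"
  unfolding is_pullback_def by blast

lemma pb_fac: "is_pullback C f X Y p P P' g q \<Longrightarrow> a \<in> hom C W X \<Longrightarrow> b \<in> hom C W P \<Longrightarrow>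
   cmp C f a = cmp C p b \<Longrightarrow> \<exists>v \<in> hom C W P'. cmp C g v = a \<and> cmp C q v = b"
  unfolding is_pullback_def by blast

lemma pb_univ:
  assumes "is_pullback C f X Y p P P' g q" "a \<in> hom C W X" "b \<in> hom C W P" "cmp C f a = cmp C p b"
  shows "\<exists>!u. u \<in> hom C W P' \<and> cmp C g u = a \<and> cmp C q u = b"
proof -
  have U: "\<forall>W a b. a \<in> hom C W X \<and> b \<in> hom C W P \<and> cmp C f a = cmp C p b \<longrightarrow>
        (\<exists>!u. u \<in> hom C W P' \<and> cmp C g u = a \<and> cmp C q u = b)"
    using assms(1) unfolding is_pullback_def by (elim conjE)
  show ?thesis by (rule U[rule_format, OF conjI[OF assms(2) conjI[OF assms(3) assms(4)]]])
qed

lemma pb_uniq: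
  assumes PB: "is_pullback C f X Y p P P' g q" and v: "v \<in> hom C W P'" "v' \<in> hom C W P'"
    and e1: "cmp C g v = cmp C g v'" and e2: "cmp C q v = cmp C q v'"
  shows "v = v'"
proof -
  have h: "f \<in> hom C X Y" "p \<in> hom C P Y" "g \<in> hom C P' X" "q \<in> hom C P' P" "cmp C f g = cmp C p q"
    using pb_hom[OF PB] by auto
  have a: "cmp C g v \<in> hom C W X" "cmp C q v \<in> hom C W P" using h v by blast+
  have "cmp C f (cmp C g v) = cmp C p (cmp C q v)" using assoc[OF v(1) h(3) h(1)] assoc[OF v(1) h(4) h(2)] h(5) by simp
  hence "\<exists>!u. u \<in> hom C W P' \<and> cmp C g u = cmp C g v \<and> cmp C q u = cmp C q v"
    using pb_univ[OF PB a] by blast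
  then obtain w where w: "\<forall>y. y \<in> hom C W P' \<and> cmp C g y = cmp C g v \<and> cmp C q y = cmp C q v \<longrightarrow> y = w"
    by (elim ex1E) blast
  have "v = w" using w v(1) by blast
  moreover have "v' = w" using w v(2) e1 e2 by auto
  ultimately show ?thesis by simp
qed

lemma pb_ker:
  assumes PB: "is_pullback C f X Y p P P' g q" and K: "is_kernel C p P Y K k"
    and u: "u \<in> hom C K P'" "cmp C g u = mzero C K X" "cmp C q u = k"
    and m: "m \<in> hom C W P'" "cmp C g m = mzero C W X"
  shows "\<exists>e \<in> hom C W K. m = cmp C u e"
proof -
  have h: "f \<in> hom C X Y" "p \<in> hom C P Y" "g \<in> hom C P' X" "q \<in> hom C P' P" "cmp C f g = cmp C p q"
    using pb_hom[OF PB] by auto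
  have k: "k \<in> hom C K P" using ker_hom[OF K] by blast
  have qm: "cmp C q m \<in> hom C W P" using h m by blast
  have "cmp C p (cmp C q m) = cmp C f (cmp C g m)" using assoc[OF m(1) h(3) h(1)] assoc[OF m(1) h(4) h(2)] h(5) by simp
  also have "\<dots> = mzero C W Y" using comp_zero_right[OF h(1) hom_obD(1)[OF m(1)]] m(2) by simp
  finally obtain e where e: "e \<in> hom C W K" "cmp C k e = cmp C q m" using ker_fac[OF K qm] by blast
  have ue: "cmp C u e \<in> hom C W P'" using u e by blast
  have "cmp C g (cmp C u e) = cmp C (cmp C g u) e" using assoc u e h by blast
  also have "\<dots> = mzero C W X" by (simp add: u(2) comp_zero_left[OF e(1) hom_obD(2)[OF h(3)]])
  finally have 1: "cmp C g (cmp C u e) = cmp C g m" using m by simp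
  have "cmp C q (cmp C u e) = cmp C (cmp C q u) e" using assoc u e h by blast
  hence 2: "cmp C q (cmp C u e) = cmp C q m" using u e by simp
  show ?thesis using e(1) pb_uniq[OF PB m(1) ue 1[symmetric] 2[symmetric]] by blast
qed

end

locale stab = pa C for C :: "('o,'m,'z) acat_scheme" +
  fixes T :: "'o set"
  assumes ab: "abelian C" and sub: "additive_subcat C T"
begin

lemma add: "additive C" using ab unfolding abelian_def by blast

lemma biprod_ex: "X \<in> ob C \<Longrightarrow> Y \<in> ob C \<Longrightarrow> \<exists>S i1 i2 p1 p2. is_biproduct C X Y S i1 i2 p1 p2"
  using add unfolding additive_def by blast

lemma ker_ex: "f \<in> hom C X Y \<Longrightarrow> \<exists>K k. is_kernel C f X Y K k"
  using ab unfolding abelian_def by blast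

lemma T_ob: "P \<in> T \<Longrightarrow> P \<in> ob C" using sub unfolding additive_subcat_def by blast

lemma T_zero: "\<exists>Z \<in> T. is_zero_obj C Z" using sub unfolding additive_subcat_def by blast

lemma T_sum: "X \<in> T \<Longrightarrow> Y \<in> T \<Longrightarrow> is_biproduct C X Y S i1 i2 p1 p2 \<Longrightarrow> S \<in> T"
  using sub unfolding additive_subcat_def by blast

lemma T_summand: "S \<in> T \<Longrightarrow> is_biproduct C X Y S i1 i2 p1 p2 \<Longrightarrow> X \<in> T"
  using sub unfolding additive_subcat_def by blast

abbreviation ft where "ft h W V \<equiv> factors_through C T h W V"

lemma ft_hom: "ft h W V \<Longrightarrow> h \<in> hom C W V"
  unfolding factors_through_def by blast

lemma ft_via: "P \<in> T \<Longrightarrow> a \<in> hom C W P \<Longrightarrow> b \<in> hom C P V \<Longrightarrow> ft (cmp C b a) W V"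
  unfolding factors_through_def by blast

lemma ft_src: assumes "W \<in> T" "h \<in> hom C W V" shows "ft h W V"
  using ft_via[OF assms(1) id_hom[OF T_ob[OF assms(1)]] assms(2)] by (simp only: id_right[OF assms(2)])

lemma ft_tgt: assumes "V \<in> T" "h \<in> hom C W V" shows "ft h W V"
  using ft_via[OF assms(1) assms(2) id_hom[OF T_ob[OF assms(1)]]] by (simp only: id_left[OF assms(2)])

lemma ft_compl: assumes "ft h W V" "a \<in> hom C V V'" shows "ft (cmp C a h) W V'"
proof -
  obtain P x y where P: "P \<in> T" "x \<in> hom C W P" "y \<in> hom C P V" "h = cmp C y x"
    using assms(1) unfolding factors_through_def by blast
  have "cmp C a h = cmp C (cmp C a y) x" using P(4) assoc[OF P(2,3) assms(2)] by simp
  thus ?thesis using ft_via[OF P(1,2) comp_hom[OF P(3) assms(2)]] by simp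
qed

lemma ft_compr: assumes "ft h W V" "a \<in> hom C W' W" shows "ft (cmp C h a) W' V"
proof -
  obtain P x y where P: "P \<in> T" "x \<in> hom C W P" "y \<in> hom C P V" "h = cmp C y x"
    using assms(1) unfolding factors_through_def by blast
  have "cmp C h a = cmp C y (cmp C x a)" using P(4) assoc[OF assms(2) P(2,3)] by simp
  thus ?thesis using ft_via[OF P(1) comp_hom[OF assms(2) P(2)] P(3)] by simp
qed

lemma ft_neg: assumes "ft h W V" shows "ft (mneg C h) W V"
proof -
  obtain P x y where P: "P \<in> T" "x \<in> hom C W P" "y \<in> hom C P V" "h = cmp C y x"
    using assms(1) unfolding factors_through_def by blast
  have "mneg C h = cmp C (mneg C y) x" using comp_neg_left[OF P(2) P(3)] P(4) by simp
  thus ?thesis using ft_via[OF P(1) P(2) neg_hom[OF P(3)]] by simp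
qed

lemma ft_zero_obj: assumes Z: "is_zero_obj C Z" and a: "a \<in> hom C W Z" and b: "b \<in> hom C Z V"
  shows "ft (cmp C b a) W V"
proof -
  obtain Z0 where Z0: "Z0 \<in> T" "is_zero_obj C Z0" using T_zero by blast
  have obs: "Z \<in> ob C" "Z0 \<in> ob C" using Z Z0 unfolding is_zero_obj_def by auto
  obtain z1 where z1: "z1 \<in> hom C Z0 Z" using Z0 obs unfolding is_zero_obj_def by blast
  obtain z2 where z2: "z2 \<in> hom C Z Z0" using Z0 obs unfolding is_zero_obj_def by blast
  have zz: "cmp C z1 z2 \<in> hom C Z Z" using z1 z2 by blast
  have "ident C Z \<in> hom C Z Z" using obs by blast
  hence idz: "cmp C z1 z2 = ident C Z" using zz Z obs unfolding is_zero_obj_def by blast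
  have "cmp C b a = cmp C b (cmp C (cmp C z1 z2) a)" using idz a by simp
  also have "\<dots> = cmp C (cmp C b z1) (cmp C z2 a)" using assoc[OF a z2 z1] assoc[OF comp_hom[OF a z2] z1 b] by simp
  finally show ?thesis using ft_via[OF Z0(1) comp_hom[OF a z2] comp_hom[OF z1 b]] by simp
qed

lemma ft_zero: assumes "W \<in> ob C" "V \<in> ob C" shows "ft (mzero C W V) W V"
proof -
  obtain Z0 where Z0: "Z0 \<in> T" "is_zero_obj C Z0" using T_zero by blast
  have o: "Z0 \<in> ob C" using T_ob Z0 by blast
  have "mzero C W V = cmp C (mzero C Z0 V) (mzero C W Z0)"
    using comp_zero_left[OF zero_hom[OF assms(1) o] assms(2)] by simp
  thus ?thesis using ft_via[OF Z0(1) zero_hom[OF assms(1) o] zero_hom[OF o assms(2)]] by simp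
qed

lemma ft_add: assumes h1: "ft h W V" and h2: "ft h' W V" shows "ft (madd C h h') W V"
proof -
  obtain P1 a1 b1 where P1: "P1 \<in> T" "a1 \<in> hom C W P1" "b1 \<in> hom C P1 V" "h = cmp C b1 a1"
    using h1 unfolding factors_through_def by blast
  obtain P2 a2 b2 where P2: "P2 \<in> T" "a2 \<in> hom C W P2" "b2 \<in> hom C P2 V" "h' = cmp C b2 a2"
    using h2 unfolding factors_through_def by blast
  obtain S i1 i2 p1 p2 where S: "is_biproduct C P1 P2 S i1 i2 p1 p2"
    using biprod_ex T_ob P1 P2 by blast
  have ST: "S \<in> T" using T_sum P1 P2 S by blast
  have s: "i1 \<in> hom C P1 S" "i2 \<in> hom C P2 S" "p1 \<in> hom C S P1" "p2 \<in> hom C S P2"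
     "cmp C p1 i1 = ident C P1" "cmp C p2 i2 = ident C P2"
     "cmp C p2 i1 = mzero C P1 P2" "cmp C p1 i2 = mzero C P2 P1"
    using S unfolding is_biproduct_def by auto
  have ob: "W \<in> ob C" "P1 \<in> ob C" "P2 \<in> ob C" "V \<in> ob C" using P1 P2 hom_obD by blast+
  define x where "x = madd C (cmp C i1 a1) (cmp C i2 a2)"
  define y where "y = madd C (cmp C b1 p1) (cmp C b2 p2)"
  have x: "x \<in> hom C W S" unfolding x_def using s P1 P2 by blast
  have y: "y \<in> hom C S V" unfolding y_def using s P1 P2 by blast
  have px1: "cmp C p1 x = a1"
  proof -
    have "cmp C p1 x = madd C (cmp C p1 (cmp C i1 a1)) (cmp C p1 (cmp C i2 a2))"
      unfolding x_def using distl s P1 P2 by blast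
    also have "\<dots> = madd C (cmp C (cmp C p1 i1) a1) (cmp C (cmp C p1 i2) a2)"
      using assoc[OF P1(2) s(1) s(3)] assoc[OF P2(2) s(2) s(3)] by simp
    also have "\<dots> = madd C a1 (mzero C W P1)" using s P1 P2 comp_zero_left ob by simp
    also have "\<dots> = a1" using add_zero P1 by blast
    finally show ?thesis .
  qed
  have px2: "cmp C p2 x = a2"
  proof -
    have "cmp C p2 x = madd C (cmp C p2 (cmp C i1 a1)) (cmp C p2 (cmp C i2 a2))"
      unfolding x_def using distl s P1 P2 by blast
    also have "\<dots> = madd C (cmp C (cmp C p2 i1) a1) (cmp C (cmp C p2 i2) a2)"
      using assoc[OF P1(2) s(1) s(4)] assoc[OF P2(2) s(2) s(4)] by simp
    also have "\<dots> = madd C (mzero C W P2) a2" using s P1 P2 comp_zero_left ob by simp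
    also have "\<dots> = a2" using zero_add P2 by blast
    finally show ?thesis .
  qed
  have "cmp C y x = madd C (cmp C (cmp C b1 p1) x) (cmp C (cmp C b2 p2) x)"
    unfolding y_def using distr x s P1 P2 by blast
  also have "\<dots> = madd C (cmp C b1 (cmp C p1 x)) (cmp C b2 (cmp C p2 x))"
    using assoc[OF x s(3) P1(3)] assoc[OF x s(4) P2(3)] by simp
  also have "\<dots> = madd C h h'" using px1 px2 P1 P2 by simp
  finally show ?thesis using ft_via[OF ST x y] by simp
qed

lemma ft_sub: "ft h W V \<Longrightarrow> ft h' W V \<Longrightarrow> ft (msub C h h') W V"
  unfolding msub_def using ft_add ft_neg by blast

lemma ft_precover: assumes "ft h W Y" "precover C T p P Y" shows "\<exists>c \<in> hom C W P. h = cmp C p c"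
proof -
  obtain Q x y where Q: "Q \<in> T" "x \<in> hom C W Q" "y \<in> hom C Q Y" "h = cmp C y x"
    using assms(1) unfolding factors_through_def by blast
  obtain v where v: "v \<in> hom C Q P" "cmp C p v = y" using assms(2) Q unfolding precover_def by blast
  have p: "p \<in> hom C P Y" using assms(2) unfolding precover_def by blast
  have "h = cmp C p (cmp C v x)" using Q(4) v(2) assoc[OF Q(2) v(1) p] by simp
  thus ?thesis using v Q by blast
qed

lemma precover_T: "precover C T p P Y \<Longrightarrow> h \<in> hom C W Y \<Longrightarrow> W \<in> T \<Longrightarrow> \<exists>c \<in> hom C W P. h = cmp C p c"
  using ft_precover ft_src by blast

text \<open>Split monos into objects of T.\<close>
lemma ft_id_T: assumes F: "ft (ident C P) P P" shows "P \<in> T"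
proof -
  obtain Q a b where Q: "Q \<in> T" "a \<in> hom C P Q" "b \<in> hom C Q P" "ident C P = cmp C b a"
    using F unfolding factors_through_def by blast
  have ob: "P \<in> ob C" "Q \<in> ob C" using Q hom_obD by blast+
  obtain K k where K: "is_kernel C b Q P K k" using ker_ex Q by blast
  have k: "k \<in> hom C K Q" "cmp C b k = mzero C K P" using ker_hom[OF K] by auto
  have obK: "K \<in> ob C" using k hom_obD by blast
  have ab: "cmp C a b \<in> hom C Q Q" using Q by blast
  define e where "e = msub C (ident C Q) (cmp C a b)"
  have e: "e \<in> hom C Q Q" unfolding e_def using ab ob by blast
  have bab: "cmp C b (cmp C a b) = b" using assoc[OF Q(3) Q(2) Q(3)] Q(4)[symmetric] id_left[OF Q(3)] by simp
  have "cmp C b e = msub C (cmp C b (ident C Q)) (cmp C b (cmp C a b))"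
    unfolding e_def using comp_sub_right ab ob Q by blast
  also have "\<dots> = mzero C Q P" using bab Q sub_self by simp
  finally obtain r where r: "r \<in> hom C Q K" "cmp C k r = e" using ker_fac[OF K e] by blast
  have kr: "cmp C k (cmp C r k) = cmp C k (ident C K)"
  proof -
    have "cmp C k (cmp C r k) = cmp C e k" using assoc[OF k(1) r(1) k(1)] r(2) by simp
    also have "\<dots> = msub C (cmp C (ident C Q) k) (cmp C (cmp C a b) k)"
      unfolding e_def using comp_sub_left k ab ob by blast
    also have "\<dots> = msub C k (cmp C a (cmp C b k))" using id_left[OF k(1)] assoc[OF k(1) Q(3) Q(2)] by simp
    also have "\<dots> = msub C k (mzero C K Q)" using k(2) comp_zero_right[OF Q(2) obK] by simp
    also have "\<dots> = k" using sub_zero k by blast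
    finally show ?thesis using k by simp
  qed
  have rk: "cmp C r k = ident C K" using ker_uniq[OF K _ _ kr] k r obK by blast
  have ra: "cmp C k (cmp C r a) = cmp C k (mzero C P K)"
  proof -
    have "cmp C k (cmp C r a) = cmp C e a" using assoc[OF Q(2) r(1) k(1)] r(2) by simp
    also have "\<dots> = msub C (cmp C (ident C Q) a) (cmp C (cmp C a b) a)"
      unfolding e_def using comp_sub_left Q ab ob by blast
    also have "\<dots> = msub C a (cmp C a (cmp C b a))" using id_left[OF Q(2)] assoc[OF Q(2) Q(3) Q(2)] by simp
    also have "\<dots> = mzero C P Q" using Q(4)[symmetric] id_right[OF Q(2)] sub_self[OF Q(2)] by simp
    also have "\<dots> = cmp C k (mzero C P K)" using comp_zero_right[OF k(1) ob(1)] by simp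
    finally show ?thesis .
  qed
  have ra0: "cmp C r a = mzero C P K" using ker_uniq[OF K _ _ ra] r Q ob obK by blast
  have sum: "madd C (cmp C a b) (cmp C k r) = ident C Q"
    using r(2) add_sub_cancel[OF id_hom[OF ob(2)] ab] unfolding e_def by simp
  have "is_biproduct C P K Q a k b r"
    unfolding is_biproduct_def using Q k r rk ra0 sum by simp
  thus ?thesis using T_summand Q by blast
qed

lemma st_refl: assumes "f \<in> hom C X Y" shows "st_eq C T X Y f f"
  unfolding st_eq_def using assms sub_self[OF assms] ft_zero[OF hom_obD[OF assms]] by simp

lemma st_sym: assumes "st_eq C T X Y f g" shows "st_eq C T X Y g f"
proof -
  have h: "f \<in> hom C X Y" "g \<in> hom C X Y" "ft (msub C f g) X Y" using assms unfolding st_eq_def by auto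
  show ?thesis unfolding st_eq_def using h ft_neg[OF h(3)] neg_sub[OF h(1,2)] by simp
qed

lemma st_trans: assumes "st_eq C T X Y f g" "st_eq C T X Y g h" shows "st_eq C T X Y f h"
proof -
  have a: "f \<in> hom C X Y" "g \<in> hom C X Y" "h \<in> hom C X Y" "ft (msub C f g) X Y" "ft (msub C g h) X Y"
    using assms unfolding st_eq_def by auto
  show ?thesis unfolding st_eq_def using a ft_add[OF a(4,5)] sub_trans[OF a(1,2,3)] by simp
qed

lemma st_compl: assumes "st_eq C T X Y f g" "a \<in> hom C Y Y'" shows "st_eq C T X Y' (cmp C a f) (cmp C a g)"
proof -
  have h: "f \<in> hom C X Y" "g \<in> hom C X Y" "ft (msub C f g) X Y" using assms unfolding st_eq_def by auto
  show ?thesis unfolding st_eq_def using h assms(2) ft_compl[OF h(3) assms(2)] comp_sub_right[OF h(1,2) assms(2)] by auto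
qed

lemma st_compr: assumes "st_eq C T X Y f g" "a \<in> hom C X' X" shows "st_eq C T X' Y (cmp C f a) (cmp C g a)"
proof -
  have h: "f \<in> hom C X Y" "g \<in> hom C X Y" "ft (msub C f g) X Y" using assms unfolding st_eq_def by auto
  show ?thesis unfolding st_eq_def using h assms(2) ft_compr[OF h(3) assms(2)] comp_sub_left[OF assms(2) h(1,2)] by auto
qed

lemma st_ft: "st_eq C T X Y f g \<Longrightarrow> ft (msub C f g) X Y"
  unfolding st_eq_def by blast

end


context stab begin

lemma cone_transfer:
  assumes f: "f \<in> hom C X Y"
    and pc: "precover C T p TY Y" and PB: "is_pullback C f X Y p TY P g q"
    and pc': "precover C T p' TY' Y'" and PB': "is_pullback C f' X' Y' p' TY' P' g' q'"
    and P'T: "P' \<in> T"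
    and ph: "ph \<in> hom C X X'" and ps: "ps \<in> hom C X' X"
    and phps1: "st_eq C T X X (cmp C ps ph) (ident C X)"
    and phps2: "st_eq C T X' X' (cmp C ph ps) (ident C X')"
    and ph': "ph' \<in> hom C Y Y'" and ps': "ps' \<in> hom C Y' Y"
    and phps3: "st_eq C T Y Y (cmp C ps' ph') (ident C Y)"
    and sq: "st_eq C T X Y' (cmp C ph' f) (cmp C f' ph)"
  shows "P \<in> T"
proof -
  have h: "p \<in> hom C TY Y" "g \<in> hom C P X" "q \<in> hom C P TY" "cmp C f g = cmp C p q"
    using pb_hom[OF PB] by auto
  have h': "f' \<in> hom C X' Y'" "p' \<in> hom C TY' Y'" "g' \<in> hom C P' X'" "q' \<in> hom C P' TY'" "cmp C f' g' = cmp C p' q'"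
    using pb_hom[OF PB'] by auto
  have TYT: "TY \<in> T" "TY' \<in> T" using pc pc' unfolding precover_def by auto
  have ob: "X \<in> ob C" "Y \<in> ob C" "P \<in> ob C" "TY \<in> ob C" "X' \<in> ob C" "Y' \<in> ob C" "P' \<in> ob C"
    using f h h' hom_obD by blast+
  obtain Om k where K: "is_kernel C p TY Y Om k" using ker_ex h by blast
  have k: "k \<in> hom C Om TY" "cmp C p k = mzero C Om Y" using ker_hom[OF K] by auto
  have obO: "Om \<in> ob C" using k hom_obD by blast
  have "cmp C f (mzero C Om X) = cmp C p k" using k comp_zero_right[OF f obO] by simp
  then obtain u where u: "u \<in> hom C Om P" "cmp C g u = mzero C Om X" "cmp C q u = k"
    using pb_fac[OF PB zero_hom[OF obO ob(1)] k(1)] by blast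
  obtain a1 where a1: "a1 \<in> hom C TY TY'" "cmp C ph' p = cmp C p' a1"
    using precover_T[OF pc' comp_hom[OF h(1) ph'] TYT(1)] by blast
  obtain a2 where a2: "a2 \<in> hom C TY' TY" "cmp C ps' p' = cmp C p a2"
    using precover_T[OF pc comp_hom[OF h'(2) ps'] TYT(2)] by blast
  have D1ft: "ft (msub C (cmp C f' ph) (cmp C ph' f)) X Y'" using st_ft[OF st_sym[OF sq]] .
  obtain s1 where s1: "s1 \<in> hom C X TY'" "msub C (cmp C f' ph) (cmp C ph' f) = cmp C p' s1"
    using ft_precover[OF D1ft pc'] by blast
  have fph: "cmp C f' ph \<in> hom C X Y'" "cmp C ph' f \<in> hom C X Y'" using f ph ph' h' by blast+
  define c where "c = madd C (cmp C s1 g) (cmp C a1 q)"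
  have c: "c \<in> hom C P TY'" unfolding c_def using s1 h a1 by blast
  have "cmp C f' (cmp C ph g) = cmp C (cmp C f' ph) g" using assoc[OF h(2) ph h'(1)] .
  also have "\<dots> = cmp C (madd C (cmp C p' s1) (cmp C ph' f)) g"
    using sub_add_cancel[OF fph] s1(2) by simp
  also have "\<dots> = madd C (cmp C (cmp C p' s1) g) (cmp C (cmp C ph' f) g)"
    using distr[OF h(2) comp_hom[OF s1(1) h'(2)] fph(2)] .
  also have "\<dots> = madd C (cmp C p' (cmp C s1 g)) (cmp C p' (cmp C a1 q))"
  proof -
    have "cmp C (cmp C p' s1) g = cmp C p' (cmp C s1 g)" using assoc[OF h(2) s1(1) h'(2)] by simp
    moreover have "cmp C (cmp C ph' f) g = cmp C p' (cmp C a1 q)"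
    proof -
      have "cmp C (cmp C ph' f) g = cmp C ph' (cmp C f g)" using assoc[OF h(2) f ph'] by simp
      also have "\<dots> = cmp C ph' (cmp C p q)" using h(4) by simp
      also have "\<dots> = cmp C (cmp C p' a1) q" using assoc[OF h(3) h(1) ph'] a1(2) by simp
      also have "\<dots> = cmp C p' (cmp C a1 q)" using assoc[OF h(3) a1(1) h'(2)] by simp
      finally show ?thesis .
    qed
    ultimately show ?thesis by simp
  qed
  also have "\<dots> = cmp C p' c" unfolding c_def
    using distl[OF comp_hom[OF h(2) s1(1)] comp_hom[OF h(3) a1(1)] h'(2)] by simp
  finally obtain gam where gam: "gam \<in> hom C P P'" "cmp C g' gam = cmp C ph g" "cmp C q' gam = c"
    using pb_fac[OF PB' comp_hom[OF h(2) ph] c] by blast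
  have D2st: "st_eq C T X' Y (cmp C f ps) (cmp C ps' f')"
  proof -
    have fps: "cmp C f ps \<in> hom C X' Y" using f ps by blast
    have 1: "st_eq C T X' Y (cmp C f ps) (cmp C (cmp C ps' ph') (cmp C f ps))"
      using st_compr[OF st_sym[OF phps3] fps] id_left[OF fps] by simp
    have "cmp C (cmp C ps' ph') (cmp C f ps) = cmp C ps' (cmp C (cmp C ph' f) ps)"
      using assoc[OF fps ph' ps'] assoc[OF ps f ph'] by simp
    moreover have "st_eq C T X' Y (cmp C ps' (cmp C (cmp C ph' f) ps)) (cmp C ps' (cmp C (cmp C f' ph) ps))"
      using st_compl[OF st_compr[OF sq ps] ps'] .
    moreover have "cmp C ps' (cmp C (cmp C f' ph) ps) = cmp C (cmp C ps' f') (cmp C ph ps)"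
      using assoc[OF ps ph h'(1)] assoc[OF comp_hom[OF ps ph] h'(1) ps'] by simp
    moreover have "st_eq C T X' Y (cmp C (cmp C ps' f') (cmp C ph ps)) (cmp C ps' f')"
      using st_compl[OF phps2 comp_hom[OF h'(1) ps']] id_right[OF comp_hom[OF h'(1) ps']] by simp
    ultimately show ?thesis using 1 st_trans by metis
  qed
  have fps: "cmp C f ps \<in> hom C X' Y" "cmp C ps' f' \<in> hom C X' Y" using f ps ps' h' by blast+
  obtain s2 where s2: "s2 \<in> hom C X' TY" "msub C (cmp C f ps) (cmp C ps' f') = cmp C p s2"
    using ft_precover[OF st_ft[OF D2st] pc] by blast
  define c' where "c' = madd C (cmp C s2 g') (cmp C a2 q')"
  have c': "c' \<in> hom C P' TY" unfolding c'_def using s2 h' a2 by blast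
  have "cmp C f (cmp C ps g') = cmp C (cmp C f ps) g'" using assoc[OF h'(3) ps f] .
  also have "\<dots> = cmp C (madd C (cmp C p s2) (cmp C ps' f')) g'"
    using sub_add_cancel[OF fps] s2(2) by simp
  also have "\<dots> = madd C (cmp C (cmp C p s2) g') (cmp C (cmp C ps' f') g')"
    using distr[OF h'(3) comp_hom[OF s2(1) h(1)] fps(2)] .
  also have "\<dots> = madd C (cmp C p (cmp C s2 g')) (cmp C p (cmp C a2 q'))"
  proof -
    have "cmp C (cmp C p s2) g' = cmp C p (cmp C s2 g')" using assoc[OF h'(3) s2(1) h(1)] by simp
    moreover have "cmp C (cmp C ps' f') g' = cmp C p (cmp C a2 q')"
    proof -
      have "cmp C (cmp C ps' f') g' = cmp C ps' (cmp C f' g')" using assoc[OF h'(3) h'(1) ps'] by simp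
      also have "\<dots> = cmp C ps' (cmp C p' q')" using h'(5) by simp
      also have "\<dots> = cmp C (cmp C p a2) q'" using assoc[OF h'(4) h'(2) ps'] a2(2) by simp
      also have "\<dots> = cmp C p (cmp C a2 q')" using assoc[OF h'(4) a2(1) h(1)] by simp
      finally show ?thesis .
    qed
    ultimately show ?thesis by simp
  qed
  also have "\<dots> = cmp C p c'" unfolding c'_def
    using distl[OF comp_hom[OF h'(3) s2(1)] comp_hom[OF h'(4) a2(1)] h(1)] by simp
  finally obtain del where del: "del \<in> hom C P' P" "cmp C g del = cmp C ps g'" "cmp C q del = c'"
    using pb_fac[OF PB comp_hom[OF h'(3) ps] c'] by blast
  have TYid: "ident C TY \<in> hom C TY TY" using ob by blast
  have pp: "cmp C ps' ph' \<in> hom C Y Y" using ph' ps' by blast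
  obtain s3 where s3: "s3 \<in> hom C Y TY" "msub C (cmp C ps' ph') (ident C Y) = cmp C p s3"
    using ft_precover[OF st_ft[OF phps3] pc] by blast
  have aa: "cmp C a2 a1 \<in> hom C TY TY" using a1 a2 by blast
  have s3p: "cmp C s3 p \<in> hom C TY TY" using s3 h by blast
  define E where "E = msub C (msub C (cmp C a2 a1) (ident C TY)) (cmp C s3 p)"
  have E: "E \<in> hom C TY TY" unfolding E_def using aa s3p TYid by blast
  have paa: "cmp C p (cmp C a2 a1) = cmp C (cmp C ps' ph') p"
  proof -
    have "cmp C p (cmp C a2 a1) = cmp C (cmp C p a2) a1" using assoc[OF a1(1) a2(1) h(1)] .
    also have "\<dots> = cmp C ps' (cmp C p' a1)" using a2(2)[symmetric] assoc[OF a1(1) h'(2) ps'] by simp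
    also have "\<dots> = cmp C (cmp C ps' ph') p" using a1(2)[symmetric] assoc[OF h(1) ph' ps'] by simp
    finally show ?thesis .
  qed
  have ps3p: "cmp C p (cmp C s3 p) = msub C (cmp C (cmp C ps' ph') p) p"
  proof -
    have "cmp C p (cmp C s3 p) = cmp C (cmp C p s3) p" using assoc[OF h(1) s3(1) h(1)] .
    also have "\<dots> = msub C (cmp C (cmp C ps' ph') p) (cmp C (ident C Y) p)"
      using s3(2)[symmetric] comp_sub_left[OF h(1) pp id_hom[OF ob(2)]] by simp
    finally show ?thesis using h(1) by simp
  qed
  have pE: "cmp C p E = mzero C TY Y"
  proof -
    have x: "cmp C (cmp C ps' ph') p \<in> hom C TY Y" using pp h by blast
    have "cmp C p E = msub C (cmp C p (msub C (cmp C a2 a1) (ident C TY))) (cmp C p (cmp C s3 p))"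
      unfolding E_def using comp_sub_right[OF sub_hom[OF aa TYid] s3p h(1)] .
    also have "\<dots> = msub C (msub C (cmp C p (cmp C a2 a1)) (cmp C p (ident C TY))) (cmp C p (cmp C s3 p))"
      using comp_sub_right[OF aa TYid h(1)] by simp
    also have "\<dots> = msub C (msub C (cmp C (cmp C ps' ph') p) p) (msub C (cmp C (cmp C ps' ph') p) p)"
      using paa ps3p h(1) by simp
    also have "\<dots> = mzero C TY Y" using sub_self[OF sub_hom[OF x h(1)]] .
    finally show ?thesis .
  qed
  obtain e0 where e0: "e0 \<in> hom C TY Om" "cmp C k e0 = E" using ker_fac[OF K E pE] by blast
  have gu: "cmp C gam u \<in> hom C Om P'" using gam u by blast
  have g'gu: "cmp C g' (cmp C gam u) = mzero C Om X'"
    using assoc[OF u(1) gam(1) h'(3)] gam(2) assoc[OF u(1) h(2) ph] u(2) comp_zero_right[OF ph obO] by simp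
  have q'gu: "cmp C q' (cmp C gam u) = cmp C a1 k"
  proof -
    have "cmp C q' (cmp C gam u) = cmp C c u" using assoc[OF u(1) gam(1) h'(4)] gam(3) by simp
    also have "\<dots> = madd C (cmp C (cmp C s1 g) u) (cmp C (cmp C a1 q) u)"
      unfolding c_def using distr[OF u(1) comp_hom[OF h(2) s1(1)] comp_hom[OF h(3) a1(1)]] .
    also have "\<dots> = madd C (mzero C Om TY') (cmp C a1 k)"
      using assoc[OF u(1) h(2) s1(1)] assoc[OF u(1) h(3) a1(1)] u(2,3) comp_zero_right[OF s1(1) obO] by simp
    also have "\<dots> = cmp C a1 k" using zero_add comp_hom[OF k(1) a1(1)] by blast
    finally show ?thesis .
  qed
  define dgu where "dgu = cmp C del (cmp C gam u)"
  have dgu: "dgu \<in> hom C Om P" unfolding dgu_def using del gu by blast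
  have gdgu: "cmp C g dgu = mzero C Om X"
    unfolding dgu_def using assoc[OF gu del(1) h(2)] del(2) assoc[OF gu h'(3) ps] g'gu comp_zero_right[OF ps obO] by simp
  have qdgu: "cmp C q dgu = cmp C (cmp C a2 a1) k"
  proof -
    have "cmp C q dgu = cmp C c' (cmp C gam u)" unfolding dgu_def using assoc[OF gu del(1) h(3)] del(3) by simp
    also have "\<dots> = madd C (cmp C (cmp C s2 g') (cmp C gam u)) (cmp C (cmp C a2 q') (cmp C gam u))"
      unfolding c'_def using distr[OF gu comp_hom[OF h'(3) s2(1)] comp_hom[OF h'(4) a2(1)]] .
    also have "\<dots> = madd C (mzero C Om TY) (cmp C a2 (cmp C a1 k))"
      using assoc[OF gu h'(3) s2(1)] assoc[OF gu h'(4) a2(1)] g'gu q'gu comp_zero_right[OF s2(1) obO] by simp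
    also have "\<dots> = cmp C (cmp C a2 a1) k" using zero_add[OF comp_hom[OF comp_hom[OF k(1) a1(1)] a2(1)]]
      assoc[OF k(1) a1(1) a2(1)] by simp
    finally show ?thesis .
  qed
  have Ek: "cmp C E k = msub C (cmp C (cmp C a2 a1) k) k"
  proof -
    have "cmp C E k = msub C (cmp C (msub C (cmp C a2 a1) (ident C TY)) k) (cmp C (cmp C s3 p) k)"
      unfolding E_def using comp_sub_left[OF k(1) sub_hom[OF aa TYid] s3p] .
    also have "\<dots> = msub C (msub C (cmp C (cmp C a2 a1) k) k) (mzero C Om TY)"
      using comp_sub_left[OF k(1) aa TYid] id_left[OF k(1)] assoc[OF k(1) h(1) s3(1)] k(2)
        comp_zero_right[OF s3(1) obO] by simp
    also have "\<dots> = msub C (cmp C (cmp C a2 a1) k) k" using sub_zero sub_hom comp_hom[OF k(1) aa] k(1) by blast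
    finally show ?thesis .
  qed
  define v where "v = msub C u dgu"
  have v: "v \<in> hom C Om P" unfolding v_def using u dgu by blast
  have e0k: "cmp C e0 k \<in> hom C Om Om" using e0 k by blast
  have ne: "mneg C (cmp C e0 k) \<in> hom C Om Om" using e0k by blast
  have gv: "cmp C g v = cmp C g (cmp C u (mneg C (cmp C e0 k)))"
    unfolding v_def using comp_sub_right[OF u(1) dgu h(2)] u(2) gdgu sub_self zero_hom[OF obO ob(1)]
      assoc[OF ne u(1) h(2)] comp_zero_left[OF ne ob(1)] by simp
  have qv: "cmp C q v = cmp C q (cmp C u (mneg C (cmp C e0 k)))"
  proof -
    have "cmp C q v = msub C k (cmp C (cmp C a2 a1) k)"
      unfolding v_def using comp_sub_right[OF u(1) dgu h(3)] u(3) qdgu by simp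
    also have "\<dots> = mneg C (cmp C E k)" using Ek neg_sub[OF comp_hom[OF k(1) aa] k(1)] by simp
    also have "\<dots> = cmp C k (mneg C (cmp C e0 k))"
      using e0(2)[symmetric] assoc[OF k(1) e0(1) k(1)] comp_neg_right[OF e0k k(1)] by simp
    also have "\<dots> = cmp C q (cmp C u (mneg C (cmp C e0 k)))" using assoc[OF ne u(1) h(3)] u(3) by simp
    finally show ?thesis .
  qed
  have veq: "v = cmp C u (mneg C (cmp C e0 k))"
    using pb_uniq[OF PB v comp_hom[OF ne u(1)] gv qv] .
  have vft: "ft v Om P"
    using veq ft_compl[OF ft_neg[OF ft_via[OF TYT(1) k(1) e0(1)]] u(1)] by simp
  have dguft: "ft dgu Om P" unfolding dgu_def using ft_compl[OF ft_tgt[OF P'T gu] del(1)] .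
  have uft: "ft u Om P" using ft_add[OF vft dguft] sub_add_cancel[OF u(1) dgu] unfolding v_def by simp
  have pps: "cmp C ps ph \<in> hom C X X" using ph ps by blast
  have idX: "ident C X \<in> hom C X X" using ob by blast
  have idP: "ident C P \<in> hom C P P" using ob by blast
  obtain T5 t5 s5 where T5: "T5 \<in> T" "t5 \<in> hom C X T5" "s5 \<in> hom C T5 X"
     "msub C (ident C X) (cmp C ps ph) = cmp C s5 t5"
    using st_ft[OF st_sym[OF phps1]] unfolding factors_through_def by blast
  obtain c5 where c5: "c5 \<in> hom C T5 TY" "cmp C f s5 = cmp C p c5"
    using precover_T[OF pc comp_hom[OF T5(3) f] T5(1)] by blast
  obtain w where w: "w \<in> hom C T5 P" "cmp C g w = s5" "cmp C q w = c5"
    using pb_fac[OF PB T5(3) c5(1) c5(2)] by blast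
  define dg where "dg = cmp C del gam"
  have dg: "dg \<in> hom C P P" unfolding dg_def using del gam by blast
  have tg: "cmp C t5 g \<in> hom C P T5" using T5 h by blast
  define wt where "wt = cmp C w (cmp C t5 g)"
  have wt: "wt \<in> hom C P P" unfolding wt_def using w tg by blast
  define m where "m = msub C (msub C (ident C P) dg) wt"
  have m: "m \<in> hom C P P" unfolding m_def using idP dg wt by blast
  have gdg: "cmp C g dg = cmp C (cmp C ps ph) g"
    unfolding dg_def using assoc[OF gam(1) del(1) h(2)] del(2) assoc[OF gam(1) h'(3) ps] gam(2)
      assoc[OF h(2) ph ps] by simp
  have gwt: "cmp C g wt = cmp C s5 (cmp C t5 g)"
    unfolding wt_def using assoc[OF tg w(1) h(2)] w(2) by simp
  have D4g: "cmp C (msub C (ident C X) (cmp C ps ph)) g = msub C g (cmp C (cmp C ps ph) g)"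
    using comp_sub_left[OF h(2) idX pps] id_left[OF h(2)] by simp
  have gm: "cmp C g m = mzero C P X"
  proof -
    have "cmp C g m = msub C (cmp C g (msub C (ident C P) dg)) (cmp C g wt)"
      unfolding m_def using comp_sub_right[OF sub_hom[OF idP dg] wt h(2)] .
    also have "\<dots> = msub C (msub C g (cmp C (cmp C ps ph) g)) (cmp C s5 (cmp C t5 g))"
      using comp_sub_right[OF idP dg h(2)] id_right[OF h(2)] gdg gwt by simp
    also have "\<dots> = msub C (cmp C s5 (cmp C t5 g)) (cmp C s5 (cmp C t5 g))"
      using D4g T5(4) assoc[OF h(2) T5(2) T5(3)] by simp
    also have "\<dots> = mzero C P X" using sub_self comp_hom[OF tg T5(3)] by blast
    finally show ?thesis .
  qed
  obtain e' where e': "e' \<in> hom C P Om" "m = cmp C u e'" using pb_ker[OF PB K u m gm] by blast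
  have mft: "ft m P P" using e'(2) ft_compr[OF uft e'(1)] by simp
  have wtft: "ft wt P P" unfolding wt_def using ft_via[OF T5(1) tg w(1)] .
  have dgft: "ft dg P P" unfolding dg_def using ft_compl[OF ft_tgt[OF P'T gam(1)] del(1)] .
  have "ident C P = madd C (madd C m wt) dg"
    unfolding m_def using sub_add_cancel[OF sub_hom[OF idP dg] wt] sub_add_cancel[OF idP dg] by simp
  hence "ft (ident C P) P P" using ft_add[OF ft_add[OF mft wtft] dgft] by simp
  thus ?thesis using ft_id_T by blast
qed


lemma biprod_eta:
  assumes S: "is_biproduct C X Y S i1 i2 p1 p2" and c: "c \<in> hom C W S"
  shows "c = madd C (cmp C i1 (cmp C p1 c)) (cmp C i2 (cmp C p2 c))"
proof -
  have s: "i1 \<in> hom C X S" "i2 \<in> hom C Y S" "p1 \<in> hom C S X" "p2 \<in> hom C S Y"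
     "madd C (cmp C i1 p1) (cmp C i2 p2) = ident C S"
    using S unfolding is_biproduct_def by auto
  have "c = cmp C (madd C (cmp C i1 p1) (cmp C i2 p2)) c" using s(5) id_left[OF c] by simp
  also have "\<dots> = madd C (cmp C (cmp C i1 p1) c) (cmp C (cmp C i2 p2) c)"
    using distr[OF c comp_hom[OF s(3) s(1)] comp_hom[OF s(4) s(2)]] .
  also have "\<dots> = madd C (cmp C i1 (cmp C p1 c)) (cmp C i2 (cmp C p2 c))"
    using assoc[OF c s(3) s(1)] assoc[OF c s(4) s(2)] by simp
  finally show ?thesis .
qed

lemma biprod_proj:
  assumes S: "is_biproduct C X Y S i1 i2 p1 p2" and a: "a \<in> hom C W X" and b: "b \<in> hom C W Y"
  shows "cmp C p1 (madd C (cmp C i1 a) (cmp C i2 b)) = a" "cmp C p2 (madd C (cmp C i1 a) (cmp C i2 b)) = b"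
proof -
  have s: "i1 \<in> hom C X S" "i2 \<in> hom C Y S" "p1 \<in> hom C S X" "p2 \<in> hom C S Y"
     "cmp C p1 i1 = ident C X" "cmp C p2 i2 = ident C Y"
     "cmp C p2 i1 = mzero C X Y" "cmp C p1 i2 = mzero C Y X"
    using S unfolding is_biproduct_def by auto
  have ob: "W \<in> ob C" "X \<in> ob C" "Y \<in> ob C" using a b hom_obD by blast+
  have "cmp C p1 (madd C (cmp C i1 a) (cmp C i2 b)) = madd C (cmp C p1 (cmp C i1 a)) (cmp C p1 (cmp C i2 b))"
    using distl[OF comp_hom[OF a s(1)] comp_hom[OF b s(2)] s(3)] .
  also have "\<dots> = madd C a (mzero C W X)"
    using assoc[OF a s(1) s(3)] assoc[OF b s(2) s(3)] s(5,8) id_left[OF a] comp_zero_left[OF b ob(2)] by simp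
  also have "\<dots> = a" using add_zero[OF a] .
  finally show "cmp C p1 (madd C (cmp C i1 a) (cmp C i2 b)) = a" .
  have "cmp C p2 (madd C (cmp C i1 a) (cmp C i2 b)) = madd C (cmp C p2 (cmp C i1 a)) (cmp C p2 (cmp C i2 b))"
    using distl[OF comp_hom[OF a s(1)] comp_hom[OF b s(2)] s(4)] .
  also have "\<dots> = madd C (mzero C W Y) b"
    using assoc[OF a s(1) s(4)] assoc[OF b s(2) s(4)] s(6,7) id_left[OF b] comp_zero_left[OF a ob(3)] by simp
  also have "\<dots> = b" using zero_add[OF b] .
  finally show "cmp C p2 (madd C (cmp C i1 a) (cmp C i2 b)) = b" .
qed

lemma pb_ex:
  assumes f: "f \<in> hom C X Y" and p: "p \<in> hom C TY Y"
  shows "\<exists>P g q. is_pullback C f X Y p TY P g q"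
proof -
  have ob: "X \<in> ob C" "Y \<in> ob C" "TY \<in> ob C" using f p hom_obD by blast+
  obtain S i1 i2 p1 p2 where S: "is_biproduct C X TY S i1 i2 p1 p2" using biprod_ex ob by blast
  have s: "i1 \<in> hom C X S" "i2 \<in> hom C TY S" "p1 \<in> hom C S X" "p2 \<in> hom C S TY"
    using S unfolding is_biproduct_def by auto
  have fp: "cmp C f p1 \<in> hom C S Y" "cmp C p p2 \<in> hom C S Y" using s f p by blast+
  define hm where "hm = msub C (cmp C f p1) (cmp C p p2)"
  have hm: "hm \<in> hom C S Y" unfolding hm_def using fp by blast
  obtain K k where K: "is_kernel C hm S Y K k" using ker_ex[OF hm] by blast
  have k: "k \<in> hom C K S" "cmp C hm k = mzero C K Y" using ker_hom[OF K] by auto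
  define g where "g = cmp C p1 k"
  define q where "q = cmp C p2 k"
  have g: "g \<in> hom C K X" "q \<in> hom C K TY" unfolding g_def q_def using k s by blast+
  have hmc: "cmp C hm c = msub C (cmp C f (cmp C p1 c)) (cmp C p (cmp C p2 c))" if c: "c \<in> hom C W S" for c W
    unfolding hm_def using comp_sub_left[OF c fp] assoc[OF c s(3) f] assoc[OF c s(4) p] by simp
  have sq: "cmp C f g = cmp C p q"
  proof -
    have "msub C (cmp C f g) (cmp C p q) = mzero C K Y" using hmc[OF k(1)] k(2) unfolding g_def q_def by simp
    thus ?thesis using sub_eq_zero comp_hom g f p by blast
  qed
  have U: "\<exists>!v. v \<in> hom C W K \<and> cmp C g v = a \<and> cmp C q v = b"
    if ab: "a \<in> hom C W X" "b \<in> hom C W TY" "cmp C f a = cmp C p b" for W a b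
  proof -
    define m where "m = madd C (cmp C i1 a) (cmp C i2 b)"
    have m: "m \<in> hom C W S" unfolding m_def using s ab by blast
    have pm: "cmp C p1 m = a" "cmp C p2 m = b" unfolding m_def using biprod_proj[OF S ab(1,2)] by auto
    have "cmp C hm m = mzero C W Y" using hmc[OF m] pm ab(3) sub_self comp_hom[OF ab(2) p] by simp
    then obtain v where v: "v \<in> hom C W K" "cmp C k v = m" using ker_fac[OF K m] by blast
    have gv: "cmp C g v = a" "cmp C q v = b" unfolding g_def q_def
      using assoc[OF v(1) k(1) s(3)] assoc[OF v(1) k(1) s(4)] v(2) pm by simp_all
    show ?thesis
    proof (rule ex1I[of _ v])
      show "v \<in> hom C W K \<and> cmp C g v = a \<and> cmp C q v = b" using v gv by blast
    next
      fix v' assume v': "v' \<in> hom C W K \<and> cmp C g v' = a \<and> cmp C q v' = b"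
      have kv': "cmp C k v' \<in> hom C W S" using v' k by blast
      have "cmp C k v' = madd C (cmp C i1 (cmp C p1 (cmp C k v'))) (cmp C i2 (cmp C p2 (cmp C k v')))"
        using biprod_eta[OF S kv'] .
      also have "\<dots> = m" unfolding m_def using v' assoc[of v' W K k S p1 X] assoc[of v' W K k S p2 TY] k s
        unfolding g_def q_def by simp
      finally show "v' = v" using ker_uniq[OF K] v v' by metis
    qed
  qed
  have "is_pullback C f X Y p TY K g q"
    unfolding is_pullback_def using f p g sq U by blast
  thus ?thesis by blast
qed

lemma pb_precover:
  assumes pc: "precover C T p TY Y" and PB: "is_pullback C f X Y p TY P g q" and PT: "P \<in> T"
  shows "precover C T g P X"
proof -
  have h: "f \<in> hom C X Y" "p \<in> hom C TY Y" "g \<in> hom C P X" "q \<in> hom C P TY"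
    using pb_hom[OF PB] by auto
  have "\<exists>u. u \<in> hom C T' P \<and> cmp C g u = h'" if a: "T' \<in> T" "h' \<in> hom C T' X" for T' h'
  proof -
    obtain c where c: "c \<in> hom C T' TY" "cmp C f h' = cmp C p c"
      using precover_T[OF pc comp_hom[OF a(2) h(1)] a(1)] by blast
    show ?thesis using pb_fac[OF PB a(2) c] by blast
  qed
  thus ?thesis unfolding precover_def using PT h by blast
qed

lemma st_eq_src: "X \<in> T \<Longrightarrow> f \<in> hom C X Y \<Longrightarrow> g \<in> hom C X Y \<Longrightarrow> st_eq C T X Y f g"
  unfolding st_eq_def using ft_src sub_hom by blast

lemma st_eq_tgt: "Y \<in> T \<Longrightarrow> f \<in> hom C X Y \<Longrightarrow> g \<in> hom C X Y \<Longrightarrow> st_eq C T X Y f g"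
  unfolding st_eq_def using ft_tgt sub_hom by blast

lemma st_iso_id: assumes "X \<in> ob C" shows "st_iso C T X X (ident C X)"
proof -
  have i: "ident C X \<in> hom C X X" using assms by blast
  have "st_eq C T X X (cmp C (ident C X) (ident C X)) (ident C X)" using st_refl[OF i] id_left[OF i] by simp
  thus ?thesis unfolding st_iso_def using i by blast
qed

lemma sm_of_pb:
  assumes f: "f \<in> hom C X Y" and pc: "precover C T p TY Y" and PB: "is_pullback C f X Y p TY P g q"
    and PT: "P \<in> T"
  shows "strong_mono C T f X Y"
proof -
  have h: "p \<in> hom C TY Y" "g \<in> hom C P X" "q \<in> hom C P TY" using pb_hom[OF PB] by auto
  have ob: "X \<in> ob C" "Y \<in> ob C" "P \<in> ob C" using f h hom_obD by blast+
  obtain Om k where K: "is_kernel C p TY Y Om k" using ker_ex h by blast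
  have k: "k \<in> hom C Om TY" "cmp C p k = mzero C Om Y" using ker_hom[OF K] by auto
  have obO: "Om \<in> ob C" using k hom_obD by blast
  have "cmp C f (mzero C Om X) = cmp C p k" using k comp_zero_right[OF f obO] by simp
  then obtain u where u: "u \<in> hom C Om P" "cmp C g u = mzero C Om X" "cmp C q u = k"
    using pb_fac[OF PB zero_hom[OF obO ob(1)] k(1)] by blast
  obtain Z where Z: "Z \<in> T" "is_zero_obj C Z" using T_zero by blast
  have obZ: "Z \<in> ob C" using Z T_ob by blast
  have std: "std_left_triangle C T Om P X Y u g f"
    unfolding std_left_triangle_def using pc K PB u by blast
  have i1: "st_iso C T Om Om (ident C Om)" using st_iso_id obO .
  have i3: "st_iso C T X X (ident C X)" using st_iso_id ob(1) .
  have i4: "st_iso C T Y Y (ident C Y)" using st_iso_id ob(2) .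
  have i2: "st_iso C T Z P (mzero C Z P)"
  proof -
    have a: "mzero C Z P \<in> hom C Z P" "mzero C P Z \<in> hom C P Z" using obZ ob by blast+
    have "st_eq C T Z Z (cmp C (mzero C P Z) (mzero C Z P)) (ident C Z)"
      using st_eq_src[OF Z(1)] a obZ by blast
    moreover have "st_eq C T P P (cmp C (mzero C Z P) (mzero C P Z)) (ident C P)"
      using st_eq_src[OF PT] a ob by blast
    ultimately show ?thesis unfolding st_iso_def using a by blast
  qed
  have z1: "mzero C Om Z \<in> hom C Om Z" "mzero C Z X \<in> hom C Z X" using obO obZ ob by blast+
  have sq1: "st_eq C T Om P (cmp C (mzero C Z P) (mzero C Om Z)) (cmp C u (ident C Om))"
    using st_eq_tgt[OF PT] z1 u obZ ob obO by blast
  have sq2: "st_eq C T Z X (cmp C (ident C X) (mzero C Z X)) (cmp C g (mzero C Z P))"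
    using st_eq_src[OF Z(1)] z1 h obZ ob by blast
  have sq3: "st_eq C T X Y (cmp C (ident C Y) f) (cmp C f (ident C X))"
    using st_refl[OF f] f by simp
  have di: "st_diag_iso C T Om Z X Y (mzero C Om Z) (mzero C Z X) f Om P X Y u g f"
    unfolding st_diag_iso_def using z1 f u h i1 i2 i3 i4 sq1 sq2 sq3 by blast
  have "left_triangle C T Om Z X Y (mzero C Om Z) (mzero C Z X) f"
    unfolding left_triangle_def using std di by blast
  thus ?thesis unfolding strong_mono_def using f pc K Z by blast
qed

lemma pb_of_sm:
  assumes SM: "strong_mono C T f X Y" and pc: "precover C T p TY Y" and PB: "is_pullback C f X Y p TY P g q"
  shows "P \<in> T"
proof -
  have f: "f \<in> hom C X Y" using SM unfolding strong_mono_def by blast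
  obtain Om Z where Z: "is_zero_obj C Z" and LT: "left_triangle C T Om Z X Y (mzero C Om Z) (mzero C Z X) f"
    using SM unfolding strong_mono_def by blast
  obtain B1 B2 B3 B4 b1 b2 b3 where std: "std_left_triangle C T B1 B2 B3 B4 b1 b2 b3"
    and di: "st_diag_iso C T Om Z X Y (mzero C Om Z) (mzero C Z X) f B1 B2 B3 B4 b1 b2 b3"
    using LT unfolding left_triangle_def by blast
  obtain TY' p' q' where pc': "precover C T p' TY' B4" and PB': "is_pullback C b3 B3 B4 p' TY' B2 b2 q'"
    using std unfolding std_left_triangle_def by blast
  obtain ph2 ph3 ph4 where i2: "st_iso C T Z B2 ph2" and i3: "st_iso C T X B3 ph3"
    and i4: "st_iso C T Y B4 ph4" and sq: "st_eq C T X B4 (cmp C ph4 f) (cmp C b3 ph3)"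
    using di unfolding st_diag_iso_def by blast
  obtain ps2 where ps2: "ph2 \<in> hom C Z B2" "ps2 \<in> hom C B2 Z" "st_eq C T B2 B2 (cmp C ph2 ps2) (ident C B2)"
    using i2 unfolding st_iso_def by blast
  have B2T: "B2 \<in> T"
  proof -
    have x: "cmp C ph2 ps2 \<in> hom C B2 B2" using ps2 by blast
    have i: "ident C B2 \<in> hom C B2 B2" using st_ft[OF ps2(3)] ft_hom sub_hom x hom_obD by blast
    have "ft (msub C (cmp C ph2 ps2) (msub C (cmp C ph2 ps2) (ident C B2))) B2 B2"
      using ft_sub[OF ft_zero_obj[OF Z ps2(2) ps2(1)] st_ft[OF ps2(3)]] .
    hence "ft (ident C B2) B2 B2" using sub_sub_self[OF x i] by simp
    thus ?thesis using ft_id_T by blast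
  qed
  obtain ps3 where ps3: "ph3 \<in> hom C X B3" "ps3 \<in> hom C B3 X" "st_eq C T X X (cmp C ps3 ph3) (ident C X)"
     "st_eq C T B3 B3 (cmp C ph3 ps3) (ident C B3)"
    using i3 unfolding st_iso_def by blast
  obtain ps4 where ps4: "ph4 \<in> hom C Y B4" "ps4 \<in> hom C B4 Y" "st_eq C T Y Y (cmp C ps4 ph4) (ident C Y)"
    using i4 unfolding st_iso_def by blast
  show ?thesis using cone_transfer[OF f pc PB pc' PB' B2T ps3(1,2,3,4) ps4(1,2,3) sq] .
qed

end

theorem proposition2p2:
  fixes C :: "('o, 'm, 'z) acat_scheme" and T :: "'o set"
    and f :: 'm and X Y :: 'o
  assumes "abelian C"
    and "additive_subcat C T"
    and "contravariantly_finite C T"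
    and "f \<in> hom C X Y"
  shows "(strong_mono C T f X Y \<longleftrightarrow>
            (\<forall>TY p P g q. precover C T p TY Y \<and> is_pullback C f X Y p TY P g q
                \<longrightarrow> precover C T g P X)) \<and>
         (strong_mono C T f X Y \<longleftrightarrow>
            (\<exists>TY p P g q. precover C T p TY Y \<and> is_pullback C f X Y p TY P g q
                \<and> precover C T g P X)) \<and>
         (strong_mono C T f X Y \<longleftrightarrow>
            (\<forall>TY p P g q. precover C T p TY Y \<and> is_pullback C f X Y p TY P g q
                \<longrightarrow> P \<in> T)) \<and>
         (strong_mono C T f X Y \<longleftrightarrow>
            (\<exists>TY p P g q. precover C T p TY Y \<and> is_pullback C f X Y p TY P g q
                \<and> P \<in> T))"
proof -
  have pre: "preadditive C" using assms(1) unfolding abelian_def additive_def by blast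
  interpret stab C T
    by (unfold_locales; (rule pre assms(1) assms(2))?)
  have Y: "Y \<in> ob C" using assms(4) hom_obD by blast
  let ?SM = "strong_mono C T f X Y"
  let ?A2 = "\<forall>TY p P g q. precover C T p TY Y \<and> is_pullback C f X Y p TY P g q \<longrightarrow> precover C T g P X"
  let ?E2 = "\<exists>TY p P g q. precover C T p TY Y \<and> is_pullback C f X Y p TY P g q \<and> precover C T g P X"
  let ?A3 = "\<forall>TY p P g q. precover C T p TY Y \<and> is_pullback C f X Y p TY P g q \<longrightarrow> P \<in> T"
  let ?E3 = "\<exists>TY p P g q. precover C T p TY Y \<and> is_pullback C f X Y p TY P g q \<and> P \<in> T"
  have 1: "?SM \<Longrightarrow> ?A3" using pb_of_sm by blast
  have 2: "?A3 \<Longrightarrow> ?A2" using pb_precover by blast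
  have 3: "?A2 \<Longrightarrow> ?E2"
  proof -
    assume A: ?A2
    obtain TY p where pc: "precover C T p TY Y" using assms(3) Y unfolding contravariantly_finite_def by blast
    have "p \<in> hom C TY Y" using pc unfolding precover_def by blast
    then obtain P g q where "is_pullback C f X Y p TY P g q" using pb_ex[OF assms(4)] by blast
    thus ?E2 using A pc by blast
  qed
  have 4: "?E2 \<Longrightarrow> ?E3" unfolding precover_def by blast
  have 5: "?E3 \<Longrightarrow> ?SM" using sm_of_pb[OF assms(4)] by blast
  show ?thesis using 1 2 3 4 5 by blast
qed

end
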